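(* For every integer $m\ge 0$ and every integer $n\ge 2$, the polynomials $l_n(x,m,s)$ satisfy $$l_n(x,m,s)=x\,l_{n-1}(x,m,s)+s\,\lambda_{n-2}(m)\,l_{n-2}(x,m,s),$$ where $\lambda_0(m)=\frac{2}{m+1}$ and $\lambda_n(m)=\frac{(n+1)(n+2m)}{(n+m)(n+m+1)}$ for $n\ge 1$.
   Context: For an integer $m\ge 0$ and indeterminates $x,s$, define $$l_n(x,m,s)=\sum_{k=0}^{\lfloor n/2\rfloor}\frac{n!}{k!\,(n-2k)!}\,\frac{1}{\prod_{j=1}^{k}(m+n-j)}\,s^k x^{n-2k}\qquad(n\ge 0),$$ with empty products equal to $1$ (so $l_0=1$, $l_1=x$). *)

theory Defs
  imports Complex_Main
begin

definition l_poly :: "nat \<Rightarrow> 'a::field_char_0 \<Rightarrow> nat \<Rightarrow> 'a \<Rightarrow> 'a" where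
  "l_poly n x m s = (\<Sum>k = 0..n div 2.
     (of_nat (fact n) / (of_nat (fact k) * of_nat (fact (n - 2*k))))
     * (1 / (\<Prod>j = 1..k. of_nat (m + n - j)))
     * s ^ k * x ^ (n - 2*k))"

definition lambda_coeff :: "nat \<Rightarrow> nat \<Rightarrow> 'a::field_char_0" where
  "lambda_coeff n m = (if n = 0 then 2 / (of_nat m + 1)
     else (of_nat (n+1) * of_nat (n + 2*m)) / (of_nat (n+m) * of_nat (n+m+1)))"

end

theory Submission
  imports Defs
begin

definition PP :: "nat \<Rightarrow> nat \<Rightarrow> nat \<Rightarrow> 'a::field_char_0" where
  "PP m n k = (\<Prod>j = 1..k. of_nat (m + n - j))"

definition cc :: "nat \<Rightarrow> nat \<Rightarrow> nat \<Rightarrow> 'a::field_char_0" where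
  "cc m n k = (of_nat (fact n) / (of_nat (fact k) * of_nat (fact (n - 2*k)))) * (1 / PP m n k)"

definition TT :: "'a::field_char_0 \<Rightarrow> 'a \<Rightarrow> nat \<Rightarrow> nat \<Rightarrow> nat \<Rightarrow> 'a" where
  "TT x s m n k = (if 2*k \<le> n then cc m n k * s^k * x^(n-2*k) else 0)"

lemma l_eq:
  assumes "n \<le> M"
  shows "l_poly n x m s = (\<Sum>k\<le>M. TT x s m n k)"
proof -
  have "l_poly n x m s = (\<Sum>k\<in>{0..n div 2}. TT x s m n k)"
    unfolding l_poly_def TT_def cc_def PP_def
    by (rule sum.cong) auto
  also have "\<dots> = (\<Sum>k\<le>M. TT x s m n k)"
    by (rule sum.mono_neutral_left) (use assms in \<open>auto simp: TT_def\<close>)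
  finally show ?thesis .
qed

lemma PP_Suc_Suc: "(PP m (Suc n) (Suc k) :: 'a::field_char_0) = of_nat (m+n) * PP m n k"
proof (induction k)
  case 0
  then show ?case by (simp add: PP_def)
next
  case (Suc k)
  have "(PP m (Suc n) (Suc (Suc k)) :: 'a) = PP m (Suc n) (Suc k) * of_nat (m + Suc n - Suc (Suc k))"
    by (simp add: PP_def prod.cl_ivl_Suc)
  also have "\<dots> = of_nat (m+n) * (PP m n k * of_nat (m + n - Suc k))"
    using Suc by simp
  also have "PP m n k * of_nat (m + n - Suc k) = (PP m n (Suc k) :: 'a)"
    by (simp add: PP_def prod.cl_ivl_Suc)
  finally show ?case .
qed

lemma PP_Suc: "(PP m n (Suc k) :: 'a::field_char_0) = PP m n k * of_nat (m + n - Suc k)"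
  by (simp add: PP_def prod.cl_ivl_Suc)

lemma PP_nz: "k < m + n \<Longrightarrow> (PP m n k :: 'a::field_char_0) \<noteq> 0"
  unfolding PP_def by (subst prod_zero_iff) (auto simp del: of_nat_add)

lemma alg1:
  fixes a J D X3 X2 M F G H A U V U2 V2 W J1 D1 :: "'a::field_char_0"
  assumes nz: "G \<noteq> 0" "H \<noteq> 0" "A \<noteq> 0" "J1 \<noteq> 0" "D1 \<noteq> 0"
    "U \<noteq> 0" "V \<noteq> 0" "W \<noteq> 0"
  and hU: "U = a+2*J+D+1" and hV: "V = a+2*J+D+2" and hW: "W = a+J+D+1"
  and hJ: "J1 = J+1" and hD: "D1 = D + 1" and hU2: "U2 = U" and hV2: "V2 = V"
  and hX3: "X3 = 2*J+D+3" and hX2: "X2 = 2*J+D+2" and hM: "M = 2*J+D+1+2*a"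
  shows "X3*(X2*F)/(J1*G*(D1*H)) * (1/(V*A)) =
    X2*F/(J1*G*H) * (1/(A*W)) + X2*M/(U2*V2) * (F/(G*(D1*H)) * (1/(A*W/U)))"
proof -
  define Q where "Q = J1*G*D1*H*A*V*W"
  have key: "X3*X2*W = X2*D1*V + X2*M*J1"
    unfolding hV hW hJ hD hX3 hX2 hM by (simp add: algebra_simps)
  have e1: "X3*(X2*F)/(J1*G*(D1*H)) * (1/(V*A)) = (X3*X2*W)*F/Q"
    unfolding Q_def using nz by (simp add: field_simps)
  have e2: "X2*F/(J1*G*H) * (1/(A*W)) = (X2*D1*V)*F/Q"
    unfolding Q_def using nz by (simp add: field_simps)
  have e3: "X2*M/(U2*V2) * (F/(G*(D1*H)) * (1/(A*W/U))) = (X2*M*J1)*F/Q"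
    unfolding Q_def hU2 hV2 using nz by (simp add: field_simps)
  show ?thesis unfolding e1 e2 e3 key by (simp add: add_divide_distrib distrib_right)
qed

lemma alg0:
  fixes a J X3 X2 M F G H A U V U2 V2 W J1 :: "'a::field_char_0"
  assumes nz: "G \<noteq> 0" "H \<noteq> 0" "A \<noteq> 0" "J1 \<noteq> 0"
    "U \<noteq> 0" "V \<noteq> 0" "W \<noteq> 0"
  and hU: "U = a+2*J" and hV: "V = a+2*J+1" and hW: "W = a+J"
  and hJ: "J1 = J+1" and hU2: "U2 = U" and hV2: "V2 = V"
  and hX3: "X3 = 2*J+2" and hX2: "X2 = 2*J+1" and hM: "M = 2*J+2*a"
  shows "X3*(X2*F)/(J1*G*H) * (1/(V*A)) = X2*M/(U2*V2) * (F/(G*H) * (1/(A*W/U)))"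
proof -
  define Q where "Q = J1*G*H*A*V*W"
  have key: "X3*X2*W = X2*M*J1"
    unfolding hV hW hJ hX3 hX2 hM by (simp add: algebra_simps)
  have e1: "X3*(X2*F)/(J1*G*H) * (1/(V*A)) = (X3*X2*W)*F/Q"
    unfolding Q_def using nz by (simp add: field_simps)
  have e3: "X2*M/(U2*V2) * (F/(G*H) * (1/(A*W/U))) = (X2*M*J1)*F/Q"
    unfolding Q_def hU2 hV2 using nz by (simp add: field_simps)
  show ?thesis unfolding e1 e3 key ..
qed

lemma coeff_id:
  assumes "2*j + d \<ge> 1"
  shows "(cc m (2*j+d+2) (j+1) :: 'a::field_char_0) =
     (if d \<ge> 1 then cc m (2*j+d+1) (j+1) else 0) + lambda_coeff (2*j+d) m * cc m (2*j+d) j"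
proof -
  define N where "N = 2*j+d"
  define A :: 'a where "A = PP m (N+1) j"
  have A0: "A \<noteq> 0" unfolding A_def by (rule PP_nz) (simp add: N_def)
  have P2: "(PP m (2*j+d+2) (j+1) :: 'a) = of_nat (m+N+1) * A"
    using PP_Suc_Suc[of m "N+1" j] by (simp add: A_def N_def)
  have P1: "(PP m (2*j+d+1) (j+1) :: 'a) = A * of_nat (m+j+d)"
    using PP_Suc[of m "N+1" j] by (simp add: A_def N_def add_ac)
  have P0': "of_nat (m+N) * (PP m N j :: 'a) = A * of_nat (m+j+d)"
    using PP_Suc_Suc[of m N j, where 'a='a] PP_Suc[of m "N+1" j, where 'a='a] by (simp add: A_def N_def add_ac)
  have "m+N \<noteq> 0" using assms unfolding N_def by arith
  then have mN: "(of_nat (m+N) :: 'a) \<noteq> 0" by (subst of_nat_eq_0_iff) simp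
  have P0x: "(PP m N j :: 'a) = A * of_nat (m+j+d) / of_nat (m+N)"
    using P0' mN by (simp add: eq_divide_eq ac_simps)
  have P0: "(PP m (2*j+d) j :: 'a) = A * of_nat (m+j+d) / of_nat (m+N)"
    using P0x unfolding N_def .
  have "m+j+d \<noteq> 0" using assms by arith
  then have mjd: "(of_nat (m+j+d) :: 'a) \<noteq> 0" by (subst of_nat_eq_0_iff) simp
  have "m+N+1 \<noteq> 0" by simp
  then have mN1: "(of_nat (m+N+1) :: 'a) \<noteq> 0" by (subst of_nat_eq_0_iff) simp
  have Nnz: "2*j+d \<noteq> 0" using assms by arith
  have lam: "(lambda_coeff (2*j+d) m :: 'a) = (of_nat (N+1) * of_nat (N + 2*m)) / (of_nat (N+m) * of_nat (N+m+1))"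
    unfolding N_def by (simp only: lambda_coeff_def if_not_P[OF Nnz])
  have "2*j+d+2 = Suc (Suc N)" by (simp add: N_def)
  then have "fact (2*j+d+2) = (N+2) * ((N+1) * (fact N :: nat))"
    by (simp only: fact_Suc) simp
  then have fN2: "(of_nat (fact (2*j+d+2)) :: 'a) = of_nat (N+2) * (of_nat (N+1) * of_nat (fact N))"
    by (simp only: of_nat_mult)
  have "fact (j+1) = (j+1) * (fact j :: nat)" by simp
  then have fj: "(of_nat (fact (j+1)) :: 'a) = of_nat (j+1) * of_nat (fact j)" by (simp only: of_nat_mult)
  have e1: "2*j+d+2 - 2*(j+1) = d" "2*j+d - 2*j = d" by simp_all
  have G0: "(of_nat (fact j) :: 'a) \<noteq> 0" by simp
  have F0: "(of_nat (j+1) :: 'a) \<noteq> 0" by (subst of_nat_eq_0_iff) simp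
  have fN: "(of_nat (fact (2*j+d)) :: 'a) = of_nat (fact N)" by (simp add: N_def)
  show ?thesis
  proof (cases d)
    case 0
    have H0: "(of_nat (fact d) :: 'a) \<noteq> 0" by simp
    have "(cc m (2*j+d+2) (j+1) :: 'a) = lambda_coeff (2*j+d) m * cc m (2*j+d) j"
      unfolding cc_def P2 P0 lam e1 fN2 fj fN
      apply (rule alg0[where a="of_nat m" and J="of_nat j"])
      using A0 mN mjd mN1 G0 H0 F0 by (simp_all add: N_def 0 add_ac)
    then show ?thesis using 0 by simp
  next
    case (Suc e)
    have e2: "2*j+d+1 - 2*(j+1) = e" using Suc by simp
    have "fact d = d * (fact e :: nat)" using Suc by simp
    then have fd: "(of_nat (fact d) :: 'a) = of_nat d * of_nat (fact e)" by (simp only: of_nat_mult)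
    have "2*j+d+1 = Suc N" by (simp add: N_def)
    then have "fact (2*j+d+1) = (N+1) * (fact N :: nat)" by simp
    then have fN1: "(of_nat (fact (2*j+d+1)) :: 'a) = of_nat (N+1) * of_nat (fact N)" by (simp only: of_nat_mult)
    have H0: "(of_nat (fact e) :: 'a) \<noteq> 0" by simp
    have D0: "(of_nat d :: 'a) \<noteq> 0" by (subst of_nat_eq_0_iff) (simp add: Suc)
    have "(cc m (2*j+d+2) (j+1) :: 'a) = cc m (2*j+d+1) (j+1) + lambda_coeff (2*j+d) m * cc m (2*j+d) j"
      unfolding cc_def P2 P1 P0 lam e1 e2 fN2 fN1 fj fd fN
      apply (rule alg1[where a="of_nat m" and J="of_nat j" and D="of_nat e"])
      using A0 mN mjd mN1 G0 H0 F0 D0 by (simp_all add: N_def Suc add_ac)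
    then show ?thesis using Suc by simp
  qed
qed


lemma TT_step:
  assumes "N \<ge> 1"
  shows "TT x s m (N+2) (Suc k) = x * TT x s m (N+1) (Suc k) + s * lambda_coeff N m * TT x s m N k"
proof (cases "2*k \<le> N")
  case False
  then show ?thesis by (simp add: TT_def)
next
  case True
  then obtain d where Nd: "N = 2*k+d" using le_Suc_ex by blast
  have ci: "(cc m (2*k+d+2) (k+1) :: 'a) =
     (if d \<ge> 1 then cc m (2*k+d+1) (k+1) else 0) + lambda_coeff (2*k+d) m * cc m (2*k+d) k"
    by (rule coeff_id) (use assms Nd in simp)
  show ?thesis
  proof (cases d)
    case 0
    show ?thesis using ci unfolding TT_def Nd 0 by (simp add: algebra_simps)
  next
    case (Suc e)
    have "x * x ^ e = x ^ d" using Suc by simp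
    show ?thesis using ci \<open>x * x ^ e = x ^ d\<close> unfolding TT_def Nd Suc by (simp add: algebra_simps)
  qed
qed

lemma TT0: "TT x s m (N+2) 0 = x * TT x s m (N+1) 0"
proof -
  have c0: "(cc m n 0 :: 'a::field_char_0) = 1" for n by (simp add: cc_def PP_def)
  show ?thesis by (simp add: TT_def c0)
qed

theorem mainTheorem3:
  fixes x s :: "'a::field_char_0" and m n :: nat
  assumes "n \<ge> 2"
  shows "l_poly n x m s = x * l_poly (n-1) x m s + s * lambda_coeff (n-2) m * l_poly (n-2) x m s"
proof -
  obtain N where nN: "n = N + 2" using assms le_Suc_ex by (metis add.commute)
  show ?thesis
  proof (cases "N = 0")
    case True
    then show ?thesis unfolding nN
      by (simp add: l_poly_def lambda_coeff_def numeral_2_eq_2 atLeastAtMostSuc_conv field_simps)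
  next
    case False
    then have N1: "N \<ge> 1" by simp
    have "l_poly (N+2) x m s = (\<Sum>k\<le>Suc (N+1). TT x s m (N+2) k)"
      by (rule l_eq) simp
    also have "\<dots> = TT x s m (N+2) 0 + (\<Sum>k\<le>N+1. TT x s m (N+2) (Suc k))"
      by (rule sum.atMost_Suc_shift)
    also have "\<dots> = x * TT x s m (N+1) 0 + (\<Sum>k\<le>N+1. x * TT x s m (N+1) (Suc k) + s * lambda_coeff N m * TT x s m N k)"
      by (intro arg_cong2[where f="(+)"] sum.cong) (simp_all only: TT_step[OF N1] TT0 refl)
    also have "\<dots> = x * (TT x s m (N+1) 0 + (\<Sum>k\<le>N+1. TT x s m (N+1) (Suc k)))
        + s * lambda_coeff N m * (\<Sum>k\<le>N+1. TT x s m N k)"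
      by (simp add: sum.distrib sum_distrib_left algebra_simps)
    also have "TT x s m (N+1) 0 + (\<Sum>k\<le>N+1. TT x s m (N+1) (Suc k)) = (\<Sum>k\<le>Suc (N+1). TT x s m (N+1) k)"
      by (rule sum.atMost_Suc_shift[symmetric])
    also have "\<dots> = l_poly (N+1) x m s" by (rule l_eq[symmetric]) simp
    also have "(\<Sum>k\<le>N+1. TT x s m N k) = l_poly N x m s" by (rule l_eq[symmetric]) simp
    finally show ?thesis unfolding nN by simp
  qed
qed

end
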